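(* Let $R$ be a finite chain ring with maximal ideal $\mathfrak{m}$ and residue field $\mathbb{F}_q$, and let $\pi:R\to\mathbb{F}_q$ be the natural projection. Let $\lambda_1,\lambda_2$ be units of $R$ with $\pi(\lambda_1)\neq\pi(\lambda_2)$. For $i=1,2$, let $C_i$ be a free $\lambda_i$-constacyclic code over $R$ of length $n$, and suppose $C_1\cap C_2$ is both $\lambda_1$-constacyclic and $\lambda_2$-constacyclic. Then $C_1\cap C_2=R^n$ or $C_1\cap C_2=\{\mathbf{0}\}$.
   Context: A finite chain ring is a finite commutative local ring whose ideals form a chain. A linear code $C\subseteq R^n$ (an $R$-submodule) is $\lambda$-constacyclic if $(\lambda c_{n-1},c_0,\dots,c_{n-2})\in C$ whenever $(c_0,\dots,c_{n-1})\in C$; free means free as an $R$-module. $\pi(r)=r+\mathfrak{m}$. *)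

theory Defs
  imports Main
begin

definition is_ideal :: "'a::comm_ring_1 set \<Rightarrow> bool" where
  "is_ideal I \<longleftrightarrow> 0 \<in> I \<and> (\<forall>x\<in>I. \<forall>y\<in>I. x + y \<in> I) \<and> (\<forall>r. \<forall>x\<in>I. r * x \<in> I)"

definition maximal_ideal :: "'a::comm_ring_1 set \<Rightarrow> bool" where
  "maximal_ideal m \<longleftrightarrow> is_ideal m \<and> m \<noteq> UNIV \<and>
     (\<forall>J. is_ideal J \<and> m \<subseteq> J \<longrightarrow> J = m \<or> J = UNIV)"

definition finite_chain_ring :: "'a::comm_ring_1 itself \<Rightarrow> bool" where
  "finite_chain_ring _ \<longleftrightarrow> finite (UNIV :: 'a set) \<and>
     (\<exists>!m::'a set. maximal_ideal m) \<and>
     (\<forall>I J :: 'a set. is_ideal I \<and> is_ideal J \<longrightarrow> I \<subseteq> J \<or> J \<subseteq> I)"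

definition proj :: "'a::comm_ring_1 set \<Rightarrow> 'a \<Rightarrow> 'a set" where
  "proj m r = {r + x | x. x \<in> m}"

text \<open>R^n: words of length n, represented as functions nat => R vanishing from index n on.\<close>
definition words :: "nat \<Rightarrow> (nat \<Rightarrow> 'a::comm_ring_1) set" where
  "words n = {c. \<forall>i\<ge>n. c i = 0}"

definition linear_code :: "nat \<Rightarrow> (nat \<Rightarrow> 'a::comm_ring_1) set \<Rightarrow> bool" where
  "linear_code n C \<longleftrightarrow> C \<subseteq> words n \<and> (\<lambda>_. 0) \<in> C \<and>
     (\<forall>c\<in>C. \<forall>d\<in>C. (\<lambda>i. c i + d i) \<in> C) \<and>
     (\<forall>r. \<forall>c\<in>C. (\<lambda>i. r * c i) \<in> C)"

definition constashift :: "'a::comm_ring_1 \<Rightarrow> nat \<Rightarrow> (nat \<Rightarrow> 'a) \<Rightarrow> (nat \<Rightarrow> 'a)" where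
  "constashift lam n c = (\<lambda>i. if i = 0 then lam * c (n - 1) else if i < n then c (i - 1) else 0)"

definition constacyclic :: "'a::comm_ring_1 \<Rightarrow> nat \<Rightarrow> (nat \<Rightarrow> 'a) set \<Rightarrow> bool" where
  "constacyclic lam n C \<longleftrightarrow> linear_code n C \<and> (\<forall>c\<in>C. constashift lam n c \<in> C)"

definition free_code :: "(nat \<Rightarrow> 'a::comm_ring_1) set \<Rightarrow> bool" where
  "free_code C \<longleftrightarrow> (\<exists>B. finite B \<and> B \<subseteq> C \<and>
     (\<forall>r. (\<lambda>i. \<Sum>b\<in>B. r b * b i) = (\<lambda>_. 0) \<longrightarrow> (\<forall>b\<in>B. r b = 0)) \<and>
     (\<forall>c\<in>C. \<exists>r. c = (\<lambda>i. \<Sum>b\<in>B. r b * b i)))"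

end

theory Submission
  imports Defs "HOL-Library.FuncSet"
begin

lemma principal_ideal: "is_ideal (range (\<lambda>r. (x::'a::comm_ring_1) * r))"
  unfolding is_ideal_def
proof (intro conjI ballI allI)
  show "0 \<in> range ((*) x)" by (metis mult_zero_right rangeI)
  fix a b assume "a \<in> range ((*) x)" "b \<in> range ((*) x)"
  then obtain u v where "a = x * u" "b = x * v" by blast
  then have "a + b = x * (u + v)" by (simp add: distrib_left)
  then show "a + b \<in> range ((*) x)" by blast
next
  fix r a assume "a \<in> range ((*) x)"
  then obtain u where "a = x * u" by blast
  then have "r * a = x * (r * u)" by (simp add: mult.left_commute)
  then show "r * a \<in> range ((*) x)" by blast
qed

lemma ideal_neg: "is_ideal I \<Longrightarrow> a \<in> I \<Longrightarrow> - a \<in> I"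
  unfolding is_ideal_def by (metis mult_minus1)

lemma one_notin_max: "maximal_ideal m \<Longrightarrow> (1::'a::comm_ring_1) \<notin> m"
  unfolding maximal_ideal_def is_ideal_def by (metis UNIV_eq_I mult.right_neutral)

lemma unit_lemma:
  fixes m :: "'a::comm_ring_1 set"
  assumes chain: "\<forall>I J :: 'a set. is_ideal I \<and> is_ideal J \<longrightarrow> I \<subseteq> J \<or> J \<subseteq> I"
    and mx: "maximal_ideal m" and t: "t \<notin> m"
  shows "t dvd 1"
proof -
  let ?T = "range (\<lambda>r. t * r)"
  have id: "is_ideal ?T" by (rule principal_ideal)
  have tT: "t \<in> ?T" by (metis mult.right_neutral rangeI)
  have im: "is_ideal m" using mx unfolding maximal_ideal_def by auto
  from chain id im have "?T \<subseteq> m \<or> m \<subseteq> ?T" by blast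
  then show ?thesis
  proof
    assume "?T \<subseteq> m" then show ?thesis using tT t by auto
  next
    assume "m \<subseteq> ?T"
    then have "?T = m \<or> ?T = UNIV" using mx id unfolding maximal_ideal_def by blast
    then have "?T = UNIV" using tT t by auto
    then have "1 \<in> ?T" by auto
    then show ?thesis by (auto simp: dvd_def)
  qed
qed

lemma one_minus_unit:
  fixes m :: "'a::comm_ring_1 set"
  assumes "maximal_ideal m" "a \<in> m"
  shows "1 - a \<notin> m"
proof
  assume "1 - a \<in> m"
  then have "(1 - a) + a \<in> m" using assms unfolding maximal_ideal_def is_ideal_def by blast
  then show False using one_notin_max[OF assms(1)] by simp
qed

lemma ann_lemma:
  fixes m :: "'a::comm_ring_1 set"
  assumes chain: "\<forall>I J :: 'a set. is_ideal I \<and> is_ideal J \<longrightarrow> I \<subseteq> J \<or> J \<subseteq> I"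
    and mx: "maximal_ideal m" and fin: "finite (UNIV :: 'a set)" and y: "y \<noteq> 0"
  shows "\<exists>z. z \<in> range (\<lambda>r. y * r) \<and> z \<noteq> 0 \<and> (\<forall>t\<in>m. z * t = 0) \<and> {s. \<forall>t\<in>m. s * t = 0} \<subseteq> range (\<lambda>r. z * r)"
proof -
  have im: "is_ideal m" using mx unfolding maximal_ideal_def by auto
  define P where "P z = (z \<in> range (\<lambda>r. y * r) \<and> z \<noteq> 0)" for z
  have "P y" unfolding P_def using y by (metis mult.right_neutral rangeI)
  from ex_has_least_nat[of P y "\<lambda>z. card (range (\<lambda>r. z * r))"] this
  obtain z where Pz: "P z" and minz: "\<And>w. P w \<Longrightarrow> card (range (\<lambda>r. z * r)) \<le> card (range (\<lambda>r. w * r))"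
    by blast
  have zann: "z * t = 0" if tm: "t \<in> m" for t
  proof (rule ccontr)
    assume nz: "z * t \<noteq> 0"
    have "P (z * t)" using Pz nz unfolding P_def by (auto simp: mult.assoc)
    then have le: "card (range (\<lambda>r. z * r)) \<le> card (range (\<lambda>r. (z * t) * r))" by (rule minz)
    have sub: "range (\<lambda>r. (z * t) * r) \<subseteq> range (\<lambda>r. z * r)" by (auto simp: mult.assoc)
    have finz: "finite (range (\<lambda>r. z * r))" using fin by (simp add: finite_subset)
    have eq: "range (\<lambda>r. (z * t) * r) = range (\<lambda>r. z * r)"
      using card_subset_eq[OF finz sub] le card_mono[OF finz sub] by simp
    have "z \<in> range (\<lambda>r. z * r)" by (metis mult.right_neutral rangeI)
    then obtain s where s: "z = z * t * s" using eq by (metis imageE)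
    have "t * s \<in> m" using im tm unfolding is_ideal_def by (metis mult.commute)
    then have "1 - t * s \<notin> m" using one_minus_unit[OF mx] by blast
    then have "(1 - t * s) dvd 1" using unit_lemma[OF chain mx] by blast
    then obtain u where u: "1 = (1 - t * s) * u" by (auto simp: dvd_def)
    have "z * (1 - t * s) = 0" using s by (simp add: algebra_simps)
    then have "z * (1 - t * s) * u = 0" by simp
    then have "z = 0" using u by (metis mult.assoc mult.right_neutral)
    then show False using Pz unfolding P_def by simp
  qed
  have "{s. \<forall>t\<in>m. s * t = 0} \<subseteq> range (\<lambda>r. z * r)"
  proof
    fix s assume "s \<in> {s. \<forall>t\<in>m. s * t = 0}"
    then have sS: "\<forall>t\<in>m. s * t = 0" by simp
    have "range (\<lambda>r. s * r) \<subseteq> range (\<lambda>r. z * r) \<or> range (\<lambda>r. z * r) \<subseteq> range (\<lambda>r. s * r)"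
      using chain principal_ideal by blast
    then show "s \<in> range (\<lambda>r. z * r)"
    proof
      assume "range (\<lambda>r. s * r) \<subseteq> range (\<lambda>r. z * r)"
      moreover have "s \<in> range (\<lambda>r. s * r)" by (metis mult.right_neutral rangeI)
      ultimately show ?thesis by blast
    next
      assume "range (\<lambda>r. z * r) \<subseteq> range (\<lambda>r. s * r)"
      moreover have "z \<in> range (\<lambda>r. z * r)" by (metis mult.right_neutral rangeI)
      ultimately obtain a where a: "z = s * a" by blast
      have "a \<notin> m" using a sS Pz unfolding P_def by auto
      then have "a dvd 1" using unit_lemma[OF chain mx] by blast
      then obtain b where b: "1 = a * b" by (auto simp: dvd_def)
      have "s = z * b" using a b by (metis mult.assoc mult.right_neutral)
      then show ?thesis by blast
    qed
  qed
  then show ?thesis using Pz zann unfolding P_def by blast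
qed

lemma code_sum:
  assumes lc: "linear_code n C" and fA: "finite A"
  shows "(\<forall>a\<in>A. f a \<in> C) \<Longrightarrow> (\<lambda>i. \<Sum>a\<in>A. f a i) \<in> C"
  using fA
proof (induction A rule: finite_induct)
  case empty
  have "(\<lambda>_. 0) \<in> C" using lc unfolding linear_code_def by blast
  then show ?case by simp
next
  case (insert x F)
  have add: "\<forall>c\<in>C. \<forall>d\<in>C. (\<lambda>i. c i + d i) \<in> C" using lc unfolding linear_code_def by blast
  have a: "f x \<in> C" using insert.prems by simp
  have b: "(\<lambda>i. \<Sum>a\<in>F. f a i) \<in> C" using insert.prems insert.IH by simp
  have "(\<lambda>i. f x i + (\<Sum>a\<in>F. f a i)) \<in> C" using add a b by fastforce
  moreover have "(\<lambda>i. \<Sum>a\<in>insert x F. f a i) = (\<lambda>i. f x i + (\<Sum>a\<in>F. f a i))"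
    using insert.hyps by simp
  ultimately show ?case by simp
qed
lemma words_finite_card:
  assumes fin: "finite (UNIV :: 'a::comm_ring_1 set)"
  shows "finite (words n :: (nat \<Rightarrow> 'a) set) \<and> card (words n :: (nat \<Rightarrow> 'a) set) \<le> card (UNIV :: 'a set) ^ n"
proof -
  let ?f = "\<lambda>c::nat \<Rightarrow> 'a. restrict c {..<n}"
  have inj: "inj_on ?f (words n)"
  proof (rule inj_onI)
    fix c d assume c: "c \<in> words n" and d: "d \<in> words n" and e: "?f c = ?f d"
    show "c = d"
    proof
      fix i show "c i = d i"
      proof (cases "i < n")
        case True then show ?thesis using fun_cong[OF e, of i] by simp
      next
        case False then show ?thesis using c d unfolding words_def by auto
      qed
    qed
  qed
  have sub: "?f ` words n \<subseteq> PiE {..<n} (\<lambda>_. UNIV)" by (rule image_subsetI, rule restrict_PiE_iff[THEN iffD2]) simp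
  have finP: "finite (PiE {..<n} (\<lambda>_. (UNIV :: 'a set)))" using fin by (simp add: finite_PiE)
  have c: "card (PiE {..<n} (\<lambda>_. (UNIV :: 'a set))) = card (UNIV :: 'a set) ^ n"
    using card_PiE[of "{..<n}" "\<lambda>_. (UNIV :: 'a set)"] by simp
  have "finite (words n :: (nat \<Rightarrow> 'a) set)" by (rule inj_on_finite[OF inj sub finP])
  moreover have "card (words n :: (nat \<Rightarrow> 'a) set) \<le> card (PiE {..<n} (\<lambda>_. (UNIV :: 'a set)))"
    by (rule card_inj_on_le[OF inj sub finP])
  ultimately show ?thesis unfolding c[symmetric] by blast
qed

lemma free_full:
  fixes m :: "'a::comm_ring_1 set" and F :: "(nat \<Rightarrow> 'a) set"
  assumes fin: "finite (UNIV :: 'a set)"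
    and lc: "linear_code n F" and fc: "free_code F"
    and Wsub: "\<forall>c\<in>words n. (\<forall>i. c i \<in> {s. \<forall>t\<in>m. s * t = 0}) \<longrightarrow> c \<in> F"
    and s0: "s0 \<in> {s. \<forall>t\<in>m. s * t = 0}" and s0nz: "s0 \<noteq> 0"
  shows "F = words n"
proof -
  define S where "S = {s. \<forall>t\<in>m. s * t = (0::'a)}"
  obtain B where fB: "finite B" and BF: "B \<subseteq> F"
    and indep: "\<forall>r. (\<lambda>i. \<Sum>b\<in>B. r b * b i) = (\<lambda>_. 0) \<longrightarrow> (\<forall>b\<in>B. r b = 0)"
    and span: "\<forall>c\<in>F. \<exists>r. c = (\<lambda>i. \<Sum>b\<in>B. r b * b i)"
    using fc unfolding free_code_def by blast
  define \<phi> where "\<phi> r = (\<lambda>i. \<Sum>b\<in>B. r b * b i)" for r :: "(nat \<Rightarrow> 'a) \<Rightarrow> 'a"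
  have phiF: "\<phi> r \<in> F" for r
  proof -
    have "\<forall>b\<in>B. (\<lambda>i. r b * b i) \<in> F" using BF lc unfolding linear_code_def by blast
    from code_sum[OF lc fB this] show ?thesis unfolding \<phi>_def .
  qed
  have phidiff: "\<phi> (\<lambda>b. r b - r' b) = (\<lambda>i. \<phi> r i - \<phi> r' i)" for r r'
    unfolding \<phi>_def by (simp add: algebra_simps sum_subtractf)
  have inj: "inj_on \<phi> A" if "A \<subseteq> PiE B (\<lambda>_. UNIV)" for A
  proof (rule inj_onI)
    fix r r' assume r: "r \<in> A" and r': "r' \<in> A" and e: "\<phi> r = \<phi> r'"
    have "\<phi> (\<lambda>b. r b - r' b) = (\<lambda>_. 0)" using phidiff e by simp
    then have h: "(\<lambda>i. \<Sum>b\<in>B. (r b - r' b) * b i) = (\<lambda>_. 0)" unfolding \<phi>_def .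
    have "\<forall>b\<in>B. r b - r' b = 0" using mp[OF spec[OF indep, of "\<lambda>b. r b - r' b"]] h by blast
    moreover have "r \<in> extensional B" "r' \<in> extensional B" using r r' that by (auto simp: PiE_def)
    ultimately show "r = r'" by (metis extensionalityI eq_iff_diff_eq_0)
  qed
  have wf: "finite (words n :: (nat \<Rightarrow> 'a) set)" and wc: "card (words n :: (nat \<Rightarrow> 'a) set) \<le> card (UNIV :: 'a set) ^ n"
    using words_finite_card[OF fin] by auto
  have Fw: "F \<subseteq> words n" using lc unfolding linear_code_def by blast
  have finF: "finite F" using finite_subset[OF Fw wf] .
  have finS: "finite S" using fin by (rule finite_subset[rotated]) simp
  have cF: "card (UNIV :: 'a set) ^ card B \<le> card F"
  proof -
    have "card (PiE B (\<lambda>_. (UNIV :: 'a set))) = card (UNIV :: 'a set) ^ card B"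
      using fB by (simp add: card_PiE)
    moreover have "card (PiE B (\<lambda>_. (UNIV :: 'a set))) \<le> card F"
      by (rule card_inj_on_le[OF inj[OF order_refl]]) (use phiF finF in auto)
    ultimately show ?thesis by simp
  qed
  define W where "W = {c \<in> words n. \<forall>i. c i \<in> S}"
  define AF where "AF = {f \<in> F. \<forall>t\<in>m. \<forall>i. t * f i = 0}"
  have c1: "card S ^ n \<le> card W"
  proof -
    let ?e = "\<lambda>g::nat \<Rightarrow> 'a. \<lambda>i. if i < n then g i else 0"
    have injE: "inj_on ?e (PiE {..<n} (\<lambda>_. S))"
    proof (rule inj_onI)
      fix g h assume g: "g \<in> PiE {..<n} (\<lambda>_. S)" and h: "h \<in> PiE {..<n} (\<lambda>_. S)" and e: "?e g = ?e h"
      show "g = h"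
      proof (rule extensionalityI[of _ "{..<n}"])
        show "g \<in> extensional {..<n}" "h \<in> extensional {..<n}" using g h by (auto simp: PiE_def)
        fix i assume "i \<in> {..<n}" then show "g i = h i" using fun_cong[OF e, of i] by simp
      qed
    qed
    have "0 \<in> S" unfolding S_def by simp
    then have subE: "?e ` PiE {..<n} (\<lambda>_. S) \<subseteq> W" unfolding W_def words_def by (auto simp: PiE_def Pi_def)
    have finW: "finite W" unfolding W_def using wf by simp
    have "card (PiE {..<n} (\<lambda>_. S)) = card S ^ n" by (simp add: card_PiE)
    then show ?thesis using card_inj_on_le[OF injE subE finW] by simp
  qed
  have c2: "card W \<le> card AF"
  proof (rule card_mono)
    show "finite AF" unfolding AF_def using finF by simp
    show "W \<subseteq> AF" unfolding W_def AF_def S_def using Wsub S_def by (auto simp: mult.commute)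
  qed
  have c3: "card AF \<le> card S ^ card B"
  proof -
    have "AF \<subseteq> \<phi> ` PiE B (\<lambda>_. S)"
    proof
      fix f assume f: "f \<in> AF"
      then obtain r where r: "f = \<phi> r" using span unfolding AF_def \<phi>_def by blast
      have rS: "r b \<in> S" if b: "b \<in> B" for b
        unfolding S_def
      proof (intro CollectI ballI)
        fix t assume t: "t \<in> m"
        have "\<phi> (\<lambda>b. t * r b) = (\<lambda>i. t * f i)" unfolding r \<phi>_def
          by (simp add: sum_distrib_left mult.assoc)
        also have "\<dots> = (\<lambda>_. 0)" using f t unfolding AF_def by auto
        finally have h: "(\<lambda>i. \<Sum>b\<in>B. (t * r b) * b i) = (\<lambda>_. 0)" unfolding \<phi>_def .
        have "t * r b = 0" using mp[OF spec[OF indep, of "\<lambda>b. t * r b"]] h b by blast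
        then show "r b * t = 0" by (simp add: mult.commute)
      qed
      have "\<phi> (restrict r B) = \<phi> r" unfolding \<phi>_def by simp
      moreover have "restrict r B \<in> PiE B (\<lambda>_. S)" using rS by auto
      ultimately show "f \<in> \<phi> ` PiE B (\<lambda>_. S)" using r by (metis imageI)
    qed
    moreover have "finite (PiE B (\<lambda>_. S))" using fB finS by (simp add: finite_PiE)
    ultimately have "card AF \<le> card (PiE B (\<lambda>_. S))" by (meson card_image_le card_mono finite_imageI le_trans)
    also have "\<dots> = card S ^ card B" using fB by (simp add: card_PiE)
    finally show ?thesis .
  qed
  have S2: "1 < card S"
  proof -
    have "{0, s0} \<subseteq> S" using s0 unfolding S_def by simp
    then have "card {0, s0} \<le> card S" using finS by (rule card_mono[rotated])
    then show ?thesis using s0nz by simp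
  qed
  have nB: "n \<le> card B" by (rule power_le_imp_le_exp[OF S2]) (use c1 c2 c3 in linarith)
  have U1: "1 \<le> card (UNIV :: 'a set)" using fin by (simp add: Suc_le_eq card_gt_0_iff)
  have "card (words n :: (nat \<Rightarrow> 'a) set) \<le> card F"
    using wc power_increasing[OF nB U1] cF by (meson le_trans)
  then show ?thesis by (intro card_subset_eq[OF wf Fw]) (use card_mono[OF wf Fw] in linarith)
qed


theorem proposition4p5:
  fixes m :: "'a::comm_ring_1 set"
    and lam1 lam2 :: 'a
    and n :: nat
    and C1 C2 :: "(nat \<Rightarrow> 'a) set"
  assumes "finite_chain_ring TYPE('a)"
    and "maximal_ideal m"
    and "lam1 dvd 1" and "lam2 dvd 1"
    and "proj m lam1 \<noteq> proj m lam2"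
    and "constacyclic lam1 n C1" and "free_code C1"
    and "constacyclic lam2 n C2" and "free_code C2"
    and "constacyclic lam1 n (C1 \<inter> C2)"
    and "constacyclic lam2 n (C1 \<inter> C2)"
  shows "C1 \<inter> C2 = words n \<or> C1 \<inter> C2 = {\<lambda>_. 0}"
proof -
  note fcr = assms(1)[unfolded finite_chain_ring_def]
  have fin: "finite (UNIV :: 'a set)" using fcr by blast
  have chain: "\<forall>I J :: 'a set. is_ideal I \<and> is_ideal J \<longrightarrow> I \<subseteq> J \<or> J \<subseteq> I" using fcr by blast
  have mx: "maximal_ideal m" by fact
  have im: "is_ideal m" using mx unfolding maximal_ideal_def by blast
  define D where "D = C1 \<inter> C2"
  define s where "s = constashift lam1 n"
  have lcD: "linear_code n D" using assms(10) unfolding D_def constacyclic_def by blast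
  have sh1: "\<forall>c\<in>D. s c \<in> D" using assms(10) unfolding D_def s_def constacyclic_def by blast
  have sh2: "\<forall>c\<in>D. constashift lam2 n c \<in> D" using assms(11) unfolding D_def constacyclic_def by blast
  have zeroD: "(\<lambda>_. 0) \<in> D" using lcD unfolding linear_code_def by blast
  have addD: "\<And>c d. c \<in> D \<Longrightarrow> d \<in> D \<Longrightarrow> (\<lambda>i. c i + d i) \<in> D" using lcD unfolding linear_code_def by blast
  have smulD: "\<And>r c. c \<in> D \<Longrightarrow> (\<lambda>i. r * c i) \<in> D" using lcD unfolding linear_code_def by blast
  have DW: "D \<subseteq> words n" using lcD unfolding linear_code_def by blast
  show ?thesis
  proof (cases "D = {\<lambda>_. 0}")
    case True then show ?thesis unfolding D_def by blast
  next
    case False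
    then obtain c where c: "c \<in> D" "c \<noteq> (\<lambda>_. 0)" using zeroD by blast
    have cw: "c \<in> words n" using c DW by blast
    obtain j where j: "j < n" "c j \<noteq> 0"
    proof -
      have "\<exists>j<n. c j \<noteq> 0"
      proof (rule ccontr)
        assume nj: "\<not> (\<exists>j<n. c j \<noteq> 0)"
        have "c = (\<lambda>_. 0)"
        proof
          fix i show "c i = 0"
          proof (cases "i < n")
            case True then show ?thesis using nj by blast
          next
            case False then show ?thesis using cw unfolding words_def by simp
          qed
        qed
        then show False using c by blast
      qed
      then show ?thesis using that by blast
    qed
    have dm: "lam1 - lam2 \<notin> m"
    proof
      assume d: "lam1 - lam2 \<in> m"
      have madd: "\<And>a b. a \<in> m \<Longrightarrow> b \<in> m \<Longrightarrow> a + b \<in> m" using im unfolding is_ideal_def by blast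
      have nd: "- (lam1 - lam2) \<in> m" using ideal_neg[OF im d] .
      have "proj m lam1 = proj m lam2" unfolding proj_def
      proof (intro set_eqI iffI)
        fix z assume "z \<in> {lam1 + x |x. x \<in> m}"
        then obtain x where x: "z = lam1 + x" "x \<in> m" by blast
        have e: "z = lam2 + ((lam1 - lam2) + x)" using x by simp
        have i: "(lam1 - lam2) + x \<in> m" by (rule madd[OF d x(2)])
        show "z \<in> {lam2 + x |x. x \<in> m}" using e i by (intro CollectI exI conjI)
      next
        fix z assume "z \<in> {lam2 + x |x. x \<in> m}"
        then obtain x where x: "z = lam2 + x" "x \<in> m" by blast
        have e: "z = lam1 + (- (lam1 - lam2) + x)" using x by simp
        have i: "- (lam1 - lam2) + x \<in> m" by (rule madd[OF nd x(2)])
        show "z \<in> {lam1 + x |x. x \<in> m}" using e i by (intro CollectI exI conjI)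
      qed
      then show False using assms(5) by (rule notE[rotated])
    qed
    obtain v where v: "1 = (lam1 - lam2) * v" using unit_lemma[OF chain mx dm] unfolding dvd_def by blast
    have F1: "(\<lambda>i. if i = 0 then d (n - 1) else 0) \<in> D" if d: "d \<in> D" for d
    proof -
      have a: "s d \<in> D" using sh1 d by blast
      have b: "(\<lambda>i. (-1) * constashift lam2 n d i) \<in> D" using smulD sh2 d by blast
      have e: "(\<lambda>i. v * (s d i + (-1) * constashift lam2 n d i)) \<in> D"
        using smulD[OF addD[OF a b]] by simp
      have key: "v * (lam1 * x + (-1) * (lam2 * x)) = x" for x
      proof -
        have "v * (lam1 * x + (-1) * (lam2 * x)) = x * ((lam1 - lam2) * v)" by (simp add: algebra_simps)
        then show ?thesis using v by simp
      qed
      have "(\<lambda>i. v * (s d i + (-1) * constashift lam2 n d i)) = (\<lambda>i. if i = 0 then d (n - 1) else 0)"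
      proof
        fix i show "v * (s d i + (-1) * constashift lam2 n d i) = (if i = 0 then d (n - 1) else 0)"
        proof (cases "i = 0")
          case True then show ?thesis using key unfolding s_def constashift_def by simp
        next
          case False then show ?thesis unfolding s_def constashift_def by simp
        qed
      qed
      then show ?thesis using e by simp
    qed
    have F2: "(s ^^ k) d \<in> D" if "d \<in> D" for d k
      using that by (induction k) (auto simp: sh1)
    have F2': "((s ^^ k) d) i = d (i - k)" if "k \<le> i" "i < n" for d k i
      using that
    proof (induction k arbitrary: i)
      case 0 then show ?case by simp
    next
      case (Suc k)
      have "((s ^^ Suc k) d) i = ((s ^^ k) d) (i - 1)"
        using Suc.prems unfolding s_def constashift_def by simp
      also have "\<dots> = d (i - 1 - k)" using Suc.prems by (intro Suc.IH) auto
      finally show ?case by simp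
    qed
    define y where "y = c j"
    have e0: "(\<lambda>i. if i = 0 then y else 0) \<in> D"
    proof -
      have h1: "(\<lambda>i. if i = 0 then ((s ^^ (n - 1 - j)) c) (n - 1) else 0) \<in> D"
        using F1[OF F2[OF c(1)]] .
      have h2: "((s ^^ (n - 1 - j)) c) (n - 1) = y"
        unfolding y_def using F2'[of "n - 1 - j" "n - 1" c] j by simp
      show ?thesis using h1 unfolding h2 .
    qed
    have F3: "(\<lambda>i. if i = 0 then r * y else 0) \<in> D" for r
    proof -
      have h1: "(\<lambda>i. r * (if i = 0 then y else 0)) \<in> D" using smulD[OF e0] .
      have h2: "(\<lambda>i. r * (if i = 0 then y else 0)) = (\<lambda>i. if i = 0 then r * y else 0)" by auto
      show ?thesis using h1 unfolding h2 .
    qed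
    have F4: "(s ^^ k) (\<lambda>i. if i = 0 then z else 0) = (\<lambda>i. if i = k then z else 0)" if "k < n" for k z
      using that
    proof (induction k)
      case 0 then show ?case by simp
    next
      case (Suc k)
      have "(s ^^ Suc k) (\<lambda>i. if i = 0 then z else 0) = s (\<lambda>i. if i = k then z else 0)"
        using Suc by simp
      also have "\<dots> = (\<lambda>i. if i = Suc k then z else 0)"
      proof
        fix i show "s (\<lambda>i. if i = k then z else 0) i = (if i = Suc k then z else 0)"
          using Suc.prems unfolding s_def constashift_def by auto
      qed
      finally show ?case .
    qed
    have E: "(\<lambda>i. if i = k then r * y else 0) \<in> D" if "k < n" for k r
      using F2[OF F3[of r], of k] F4[OF that, of "r * y"] by simp
    have F5: "\<forall>c'\<in>words n. (\<forall>i. c' i \<in> range (\<lambda>r. y * r)) \<longrightarrow> c' \<in> D"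
    proof (intro ballI impI)
      fix c' assume cw': "c' \<in> words n" and cr: "\<forall>i. c' i \<in> range (\<lambda>r. y * r)"
      have terms: "\<forall>k\<in>{..<n}. (\<lambda>i. if i = k then c' k else 0) \<in> D"
      proof
        fix k assume k: "k \<in> {..<n}"
        obtain r where r: "c' k = y * r" using cr by blast
        have h: "(\<lambda>i. if i = k then r * y else 0) \<in> D" using E k by simp
        have rr: "c' k = r * y" using r by (simp add: mult.commute)
        show "(\<lambda>i. if i = k then c' k else 0) \<in> D" unfolding rr by (rule h)
      qed
      have "(\<lambda>i. \<Sum>k\<in>{..<n}. (\<lambda>i. if i = k then c' k else 0) i) \<in> D"
        by (rule code_sum[OF lcD finite_lessThan terms])
      moreover have "(\<lambda>i. \<Sum>k\<in>{..<n}. (\<lambda>i. if i = k then c' k else 0) i) = c'"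
      proof
        fix i show "(\<Sum>k\<in>{..<n}. (\<lambda>i. if i = k then c' k else 0) i) = c' i"
        proof (cases "i < n")
          case True then show ?thesis by (simp add: sum.delta')
        next
          case False
          then have "(\<Sum>k\<in>{..<n}. (\<lambda>i. if i = k then c' k else 0) i) = 0" by (intro sum.neutral) auto
          then show ?thesis using False cw' unfolding words_def by simp
        qed
      qed
      ultimately show "c' \<in> D" by simp
    qed
    have y0: "y \<noteq> 0" unfolding y_def using j by simp
    obtain z where z: "z \<in> range (\<lambda>r. y * r)" "z \<noteq> 0" "\<forall>t\<in>m. z * t = 0"
      and Sz: "{s. \<forall>t\<in>m. s * t = 0} \<subseteq> range (\<lambda>r. z * r)"
      using ann_lemma[OF chain mx fin y0] by blast
    have Sy: "{s. \<forall>t\<in>m. s * t = 0} \<subseteq> range (\<lambda>r. y * r)"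
    proof
      fix u assume "u \<in> {s. \<forall>t\<in>m. s * t = 0}"
      then obtain b where b: "u = z * b" using Sz by blast
      obtain a where a: "z = y * a" using z(1) by blast
      have "u = y * (a * b)" using a b by (simp add: mult.assoc)
      then show "u \<in> range (\<lambda>r. y * r)" by blast
    qed
    have zS: "z \<in> {s. \<forall>t\<in>m. s * t = 0}" using z(3) by simp
    have Wsub: "\<forall>c\<in>words n. (\<forall>i. c i \<in> {s. \<forall>t\<in>m. s * t = 0}) \<longrightarrow> c \<in> D"
      using F5 Sy by blast
    have "C1 = words n"
      by (rule free_full[OF fin _ assms(7) _ zS z(2)])
        (use assms(6) Wsub D_def in \<open>auto simp: constacyclic_def\<close>)
    moreover have "C2 = words n"
      by (rule free_full[OF fin _ assms(9) _ zS z(2)])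
        (use assms(8) Wsub D_def in \<open>auto simp: constacyclic_def\<close>)
    ultimately show ?thesis by simp
  qed
qed


end
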